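(* Let $n\ge1$ be an integer. There exists a constant $C=C(n)>0$ such that for all pairwise distinct points $z_1,z_2,z_3\in\mathbb{R}^2$ and $i=1,2$, $$p_i(z_1,z_2,z_3)\le C\,c(z_1,z_2,z_3)^2.$$
   Context: For $i=1,2$ and $x\in\mathbb{R}^2\setminus\{0\}$, $K_i(x)=x_i^{2n-1}/|x|^{2n}$, and $p_i(z_1,z_2,z_3)=K_i(z_1-z_2)K_i(z_1-z_3)+K_i(z_2-z_1)K_i(z_2-z_3)+K_i(z_3-z_1)K_i(z_3-z_2)$. The Menger curvature $c(z_1,z_2,z_3)$ is the inverse of the radius of the circle through $z_1,z_2,z_3$ (equal to $0$ if the points are collinear). *)

theory Defs
  imports "HOL-Analysis.Analysis"
begin

definition Kker :: "nat \<Rightarrow> 2 \<Rightarrow> real^2 \<Rightarrow> real" where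
  "Kker n i x = (x $ i) ^ (2*n - 1) / (norm x) ^ (2*n)"

definition pfun :: "nat \<Rightarrow> 2 \<Rightarrow> real^2 \<Rightarrow> real^2 \<Rightarrow> real^2 \<Rightarrow> real" where
  "pfun n i z1 z2 z3 =
     Kker n i (z1 - z2) * Kker n i (z1 - z3)
   + Kker n i (z2 - z1) * Kker n i (z2 - z3)
   + Kker n i (z3 - z1) * Kker n i (z3 - z2)"

definition menger :: "real^2 \<Rightarrow> real^2 \<Rightarrow> real^2 \<Rightarrow> real" where
  "menger z1 z2 z3 =
     (if collinear {z1, z2, z3} then 0
      else 1 / (THE r. \<exists>x. dist x z1 = r \<and> dist x z2 = r \<and> dist x z3 = r))"

end

theory Submission
  imports Defs
begin

definition dd :: "(real \<Rightarrow> real) \<Rightarrow> real \<Rightarrow> real \<Rightarrow> real \<Rightarrow> real" where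
  "dd h x y z = (h x*(y-z) - h y*(x-z) + h z*(x-y)) / ((x-y)*(x-z)*(y-z))"

lemma dd_sorted:
  fixes h h1 h2 :: "real \<Rightarrow> real"
  assumes xy: "x < y" and yz: "y < z"
    and d1: "\<And>v. (h has_real_derivative h1 v) (at v)"
    and d2: "\<And>v. (h1 has_real_derivative h2 v) (at v)"
  shows "\<exists>\<xi>. x < \<xi> \<and> \<xi> < z \<and> dd h x y z = h2 \<xi> / 2"
proof -
  define L where "L = (h y - h x)/(y-x)"
  define D where "D = dd h x y z"
  define g where "g v = h v - h x - L*(v-x) - D*(v-x)*(v-y)" for v
  define g1 where "g1 w = h1 w - L - D*(2*w - x - y)" for w
  have dg: "(g has_real_derivative g1 v) (at v)" for v
    unfolding g_def g1_def
    by (rule derivative_eq_intros d1 refl | simp)+ (simp add: algebra_simps)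
  have dg1: "(g1 has_real_derivative (h2 v - 2*D)) (at v)" for v
    unfolding g1_def
    by (rule derivative_eq_intros d2 refl | simp)+
  have cg: "continuous_on S g" for S
    using dg by (meson DERIV_isCont continuous_at_imp_continuous_on)
  have cg1: "continuous_on S g1" for S
    using dg1 by (meson DERIV_isCont continuous_at_imp_continuous_on)
  have gx: "g x = 0" by (simp add: g_def)
  have gy: "g y = 0" using xy by (simp add: g_def L_def field_simps)
  have n1: "x - y \<noteq> 0" "x - z \<noteq> 0" "y - z \<noteq> 0" "y - x \<noteq> 0" "z - x \<noteq> 0" "z - y \<noteq> 0"
    using xy yz by auto
  have gz: "g z = 0"
  proof -
    have P: "(x-y)*(x-z)*(y-z) \<noteq> 0" "y - x \<noteq> 0" using n1 by auto
    show ?thesis unfolding g_def L_def D_def dd_def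
      using n1 by (simp add: divide_simps P) (simp add: algebra_simps)
  qed
  obtain a where a: "x < a" "a < y" "g1 a = 0"
    using Rolle_deriv[of x y g "\<lambda>v w. g1 v * w"] xy gx gy cg dg
    by (auto simp: has_field_derivative_def fun_eq_iff)
  obtain b where b: "y < b" "b < z" "g1 b = 0"
    using Rolle_deriv[of y z g "\<lambda>v w. g1 v * w"] yz gy gz cg dg
    by (auto simp: has_field_derivative_def fun_eq_iff)
  obtain c where c: "a < c" "c < b" "h2 c - 2*D = 0"
    using Rolle_deriv[of a b g1 "\<lambda>v w. (h2 v - 2*D) * w"] a b cg1 dg1
    by (auto simp: has_field_derivative_def fun_eq_iff)
  show ?thesis using a b c by (intro exI[of _ c]) (auto simp: D_def)
qed

lemma dd_swap12: "dd h x y z = dd h y x z"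
proof -
  have "h y*(x-z) - h x*(y-z) + h z*(y-x) = - (h x*(y-z) - h y*(x-z) + h z*(x-y))"
       "(y-x)*(y-z)*(x-z) = - ((x-y)*(x-z)*(y-z))" by algebra+
  then show ?thesis unfolding dd_def by (simp only: minus_divide_divide)
qed

lemma dd_swap23: "dd h x y z = dd h x z y"
proof -
  have "h x*(z-y) - h z*(x-y) + h y*(x-z) = - (h x*(y-z) - h y*(x-z) + h z*(x-y))"
       "(x-z)*(x-y)*(z-y) = - ((x-y)*(x-z)*(y-z))" by algebra+
  then show ?thesis unfolding dd_def by (simp only: minus_divide_divide)
qed

lemma dd_mvt:
  fixes h h1 h2 :: "real \<Rightarrow> real"
  assumes dist: "x \<noteq> y" "x \<noteq> z" "y \<noteq> z"
    and d1: "\<And>v. (h has_real_derivative h1 v) (at v)"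
    and d2: "\<And>v. (h1 has_real_derivative h2 v) (at v)"
  shows "\<exists>\<xi>. \<xi>^2 \<le> x^2 + y^2 + z^2 \<and> dd h x y z = h2 \<xi> / 2"
proof -
  have key: "\<exists>\<xi>. \<xi>^2 \<le> a^2 + c^2 \<and> dd h a b c = h2 \<xi> / 2" if ab: "a < b" "b < c" for a b c
  proof -
    obtain \<xi> where "a < \<xi>" "\<xi> < c" "dd h a b c = h2 \<xi> / 2"
      using dd_sorted[OF ab d1 d2] by blast
    moreover have "\<xi>^2 \<le> a^2 + c^2"
    proof (cases "\<xi> \<ge> 0")
      case True
      then have "\<xi>^2 \<le> c^2" using \<open>\<xi> < c\<close> by (simp add: power_mono)
      then show ?thesis by (smt (verit) zero_le_power2)
    next
      case False
      then have "(-\<xi>)^2 \<le> (-a)^2" using \<open>a < \<xi>\<close> by (intro power_mono) auto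
      then show ?thesis by (smt (verit) power2_minus zero_le_power2)
    qed
    ultimately show ?thesis by blast
  qed
  have sq: "\<And>a b. a^2 \<le> a^2 + b^2 + (c::real)^2" "\<And>a b c. (a::real)^2 + c^2 \<le> a^2 + b^2 + c^2"
    by (simp_all add: add_increasing2)
  consider "x < y" "y < z" | "x < z" "z < y" | "y < x" "x < z" | "y < z" "z < x" | "z < x" "x < y" | "z < y" "y < x"
    using dist by linarith
  then show ?thesis
  proof cases
    case 1 then show ?thesis using key[of x y z] by (smt (verit) zero_le_power2)
  next
    case 2 then show ?thesis using key[of x z y] dd_swap23[of h x y z] by (smt (verit) zero_le_power2)
  next
    case 3 then show ?thesis using key[of y x z] dd_swap12[of h x y z] by (smt (verit) zero_le_power2)
  next
    case 4 then show ?thesis using key[of y z x] dd_swap12[of h x y z] dd_swap23[of h y x z]  by (smt (verit) zero_le_power2)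
  next
    case 5 then show ?thesis using key[of z x y] dd_swap23[of h x y z] dd_swap12[of h x z y] by (smt (verit) zero_le_power2)
  next
    case 6 then show ?thesis using key[of z y x] dd_swap12[of h x y z] dd_swap23[of h y x z] dd_swap12[of h y z x] by (smt (verit) zero_le_power2)
  qed
qed


definition hh :: "nat \<Rightarrow> real \<Rightarrow> real" where "hh n v = (1 + v^2)^n"

lemma hh_d1: "(hh n has_real_derivative (2 * real n * v * (1+v^2)^(n-1))) (at v)"
  unfolding hh_def
  by (rule derivative_eq_intros refl | simp)+

lemma hh_d2: "((\<lambda>v. 2 * real n * v * (1+v^2)^(n-1)) has_real_derivative
     (2 * real n * (1+v^2)^(n-1) + 4 * real n * real (n-1) * v^2 * (1+v^2)^(n-2))) (at v)"
proof -
  have e: "n - Suc (Suc 0) = n - 2" by simp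
  show ?thesis
  by (rule derivative_eq_intros refl | simp)+ (simp add: algebra_simps power2_eq_square e)
qed


lemma hh_h2_bound:
  assumes "n \<ge> 1"
  shows "\<bar>(2 * real n * (1+v^2)^(n-1) + 4 * real n * real (n-1) * v^2 * (1+v^2)^(n-2)) / 2\<bar>
     \<le> 2 * real n ^ 2 * (1 + v^2)^(n-1)"
proof -
  define H where "H = (1+v^2::real)"
  have H1: "H \<ge> 1" by (simp add: H_def)
  have B: "real n * real (n-1) * (v^2 * H^(n-2)) \<le> real n * real (n-1) * H^(n-1)"
  proof (cases "n = 1")
    case True then show ?thesis by simp
  next
    case False
    then have n2: "n \<ge> 2" using assms by auto
    obtain k where k: "n = k + 2" using n2 by (metis add.commute le_Suc_ex)
    have e: "H^(n-1) = H * H^(n-2)" unfolding k by simp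
    have A: "v^2 * H^(n-2) \<le> H^(n-1)"
      unfolding e by (intro mult_right_mono) (auto simp: H_def)
    show ?thesis by (intro mult_left_mono A) auto
  qed
  have rn: "real (n-1) = real n - 1" using assms by simp
  have P: "0 \<le> real n * real (n-1) * (v^2 * H^(n-2))" "0 \<le> H^(n-1)" using H1 by simp_all
  have eq: "(2 * real n * H^(n-1) + 4 * real n * real (n-1) * v^2 * H^(n-2)) / 2
      = real n * H^(n-1) + 2 * (real n * real (n-1) * (v^2 * H^(n-2)))"
    by (simp add: field_simps)
  have "\<bar>(2 * real n * H^(n-1) + 4 * real n * real (n-1) * v^2 * H^(n-2)) / 2\<bar>
      = real n * H^(n-1) + 2 * (real n * real (n-1) * (v^2 * H^(n-2)))"
    unfolding eq using P by (intro abs_of_nonneg) simp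
  also have "\<dots> \<le> real n * H^(n-1) + 2 * (real n * real (n-1) * H^(n-1))" using B by linarith
  also have "\<dots> = (2 * real n ^ 2 - real n) * H^(n-1)" unfolding rn by (simp add: algebra_simps power2_eq_square)
  also have "\<dots> \<le> 2 * real n ^ 2 * H^(n-1)" using P by (intro mult_right_mono) auto
  finally show ?thesis by (simp add: H_def)
qed

lemma dd_bound:
  assumes n: "n \<ge> 1" and dist: "s \<noteq> t" "s \<noteq> u" "t \<noteq> u"
  shows "\<bar>dd (hh n) s t u\<bar> \<le> 2 * real n ^ 2 * ((1+s^2)*(1+t^2)*(1+u^2))^(n-1)"
proof -
  obtain \<xi> where xi: "\<xi>^2 \<le> s^2 + t^2 + u^2"
    and e: "dd (hh n) s t u = (2 * real n * (1+\<xi>^2)^(n-1) + 4 * real n * real (n-1) * \<xi>^2 * (1+\<xi>^2)^(n-2)) / 2"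
    using dd_mvt[OF dist, of "hh n", OF hh_d1 hh_d2] by blast
  have "1 + \<xi>^2 \<le> (1+s^2)*(1+t^2)*(1+u^2)"
  proof -
    have "0 \<le> s^2*t^2 + s^2*u^2 + t^2*u^2 + s^2*t^2*u^2" by simp
    moreover have "(1+s^2)*(1+t^2)*(1+u^2) = 1 + (s^2+t^2+u^2) + (s^2*t^2 + s^2*u^2 + t^2*u^2 + s^2*t^2*u^2)"
      by algebra
    ultimately show ?thesis using xi by linarith
  qed
  then have "(1 + \<xi>^2)^(n-1) \<le> ((1+s^2)*(1+t^2)*(1+u^2))^(n-1)"
    by (intro power_mono) auto
  then have "2 * real n ^ 2 * (1 + \<xi>^2)^(n-1) \<le> 2 * real n ^ 2 * ((1+s^2)*(1+t^2)*(1+u^2))^(n-1)"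
    by (intro mult_left_mono) auto
  then show ?thesis unfolding e using hh_h2_bound[OF n, of \<xi>] by linarith
qed

lemma deg_case:
  fixes X Y Q1 Q2 Q3 :: real
  assumes n: "n \<ge> 1" and "X^2 \<le> Q1" "X^2 \<le> Q2" "Y^2 = Q3"
  shows "X^(2*(2*n-1)) * Y^(2*n) \<le> 2 * real n ^ 2 * (X*Y)^2 * (Q1*Q2*Q3)^(n-1)"
proof -
  have x1: "2*(2*n-1) = 2 + 2*(n-1) + 2*(n-1)" "2*n = 2 + 2*(n-1)" using n by auto
  have e1: "X^(2*(2*n-1)) = X^2 * ((X^2)^(n-1) * (X^2)^(n-1))"
    unfolding x1(1) power_add power_mult by (simp only: mult.assoc)
  have e2: "Y^(2*n) = Y^2 * (Y^2)^(n-1)"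
    unfolding x1(2) power_add power_mult by simp
  have "(X^2)^(n-1) * (X^2)^(n-1) * (Y^2)^(n-1) \<le> Q1^(n-1) * Q2^(n-1) * Q3^(n-1)"
  proof -
    have q: "0 \<le> Q1" "0 \<le> Q2" using assms by (auto intro: order_trans[OF zero_le_power2])
    show ?thesis using assms q by (intro mult_mono power_mono) auto
  qed
  then have "X^2 * Y^2 * ((X^2)^(n-1) * (X^2)^(n-1) * (Y^2)^(n-1)) \<le> X^2 * Y^2 * (Q1^(n-1) * Q2^(n-1) * Q3^(n-1))"
    by (intro mult_left_mono) auto
  also have "\<dots> \<le> 2 * real n ^ 2 * (X^2 * Y^2 * (Q1^(n-1) * Q2^(n-1) * Q3^(n-1)))"
  proof -
    have "0 \<le> Q1^(n-1) * Q2^(n-1) * Q3^(n-1)"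
      using assms by (intro mult_nonneg_nonneg zero_le_power) (auto intro: order_trans[OF zero_le_power2])
    moreover have "1 \<le> 2 * real n ^ 2"
    proof -
      have "1 \<le> real n" using n by simp
      then have "1 \<le> real n ^ 2" by (simp add: one_le_power)
      then show ?thesis by linarith
    qed
    ultimately show ?thesis using mult_right_mono[of 1 "2 * real n ^ 2" "X^2 * Y^2 * (Q1^(n-1) * Q2^(n-1) * Q3^(n-1))"]
      by simp
  qed
  finally show ?thesis unfolding e1 e2 by (simp add: algebra_simps power_mult_distrib)
qed

lemma field_id:
  fixes a1 a2 b1 b2 s t u hs ht hu :: real
  assumes a1: "a1 \<noteq> 0" and b1: "b1 \<noteq> 0" and w1: "a1 - b1 \<noteq> 0"
    and s: "s = a2/a1" and t: "t = b2/b1" and u: "u = (a2-b2)/(a1-b1)"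
    and st: "s \<noteq> t"
  shows "a1*(a1-b1)*b1^2*ht + a1*b1*(a1-b1)^2*hu - (a1-b1)*b1*a1^2*hs
       = (a1*b2-a2*b1)^2 * ((hs*(t-u) - ht*(s-u) + hu*(s-t))/((s-t)*(s-u)*(t-u)))"
proof -
  have a2: "a2 = s*a1" using s a1 by simp
  have b2: "b2 = t*b1" using t b1 by simp
  obtain w where w: "w = a1 - b1" by blast
  have wz: "w \<noteq> 0" using w w1 by simp
  have su: "s - u = b1*(t-s)/w" unfolding u a2 b2 w using w1 by (simp add: field_simps)
  have tu: "t - u = a1*(t-s)/w" unfolding u a2 b2 w using w1 by (simp add: field_simps)
  have D: "a1*b2-a2*b1 = a1*b1*(t-s)" unfolding a2 b2 by (simp add: algebra_simps)
  have ts: "t - s \<noteq> 0" using st by auto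
  obtain d where d: "d = t - s" by blast
  have dz: "d \<noteq> 0" using d ts by simp
  have sd: "s - t = -d" using d by simp
  have N: "hs*(t-u) - ht*(s-u) + hu*(s-t) = d/w * (a1*hs - b1*ht - w*hu)"
    unfolding su tu sd d[symmetric] using wz by (simp add: field_simps)
  have Den: "(s-t)*(s-u)*(t-u) = -(a1*b1*d^3/w^2)"
    unfolding su tu sd d[symmetric] using wz by (simp add: field_simps power2_eq_square power3_eq_cube)
  show ?thesis unfolding N Den D w[symmetric] d[symmetric] using a1 b1 wz dz
    by (simp add: field_simps) (simp add: algebra_simps power2_eq_square power3_eq_cube)
qed

lemma uv_facts:
  fixes a1 a2 b1 b2 s t u :: real
  assumes a1: "a1 \<noteq> 0" and b1: "b1 \<noteq> 0" and w1: "a1 - b1 \<noteq> 0"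
    and s: "s = a2/a1" and t: "t = b2/b1" and u: "u = (a2-b2)/(a1-b1)"
  shows "s - u = b1*(t-s)/(a1-b1)" "t - u = a1*(t-s)/(a1-b1)"
    "a1*b2-a2*b1 = a1*b1*(t-s)"
proof -
  have a2: "a2 = s*a1" using s a1 by simp
  have b2: "b2 = t*b1" using t b1 by simp
  show "s - u = b1*(t-s)/(a1-b1)" unfolding u a2 b2 using w1 by (simp add: field_simps)
  show "t - u = a1*(t-s)/(a1-b1)" unfolding u a2 b2 using w1 by (simp add: field_simps)
  show "a1*b2-a2*b1 = a1*b1*(t-s)" unfolding a2 b2 by (simp add: algebra_simps)
qed

lemma qa_hh:
  fixes a1 a2 :: real
  assumes "a1 \<noteq> 0"
  shows "(a1^2+a2^2)^n = a1^(2*n) * hh n (a2/a1)" "a1^2+a2^2 = a1^2 * (1 + (a2/a1)^2)"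
proof -
  show e: "a1^2+a2^2 = a1^2 * (1 + (a2/a1)^2)" using assms by (simp add: field_simps)
  show "(a1^2+a2^2)^n = a1^(2*n) * hh n (a2/a1)" unfolding e hh_def
    by (simp add: power_mult_distrib power_mult)
qed

lemma main_case:
  fixes a1 a2 b1 b2 :: real
  assumes a1: "a1 \<noteq> 0" and b1: "b1 \<noteq> 0" and w1: "a1 - b1 \<noteq> 0"
  shows "a1^(2*j+1) * (a1-b1)^(2*j+1) * (b1^2+b2^2)^(j+1) + a1^(2*j+1)*b1^(2*j+1)*((a1-b1)^2+(a2-b2)^2)^(j+1)
           - (a1-b1)^(2*j+1)*b1^(2*j+1)*(a1^2+a2^2)^(j+1)
   = (a1*b1*(a1-b1))^(2*j) * (a1*(a1-b1)*b1^2*hh (j+1) (b2/b1) + a1*b1*(a1-b1)^2*hh (j+1) ((a2-b2)/(a1-b1))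
        - (a1-b1)*b1*a1^2*hh (j+1) (a2/a1))"
proof -
  obtain w where w: "w = a1 - b1" by blast
  have e: "(2::nat)*(j+1) = 2*j+2" by simp
  show ?thesis unfolding qa_hh(1)[OF a1] qa_hh(1)[OF b1] qa_hh(1)[OF w1] e
    unfolding w[symmetric] by (simp add: power_add power_mult_distrib power2_eq_square algebra_simps)
qed

lemma deg_case_j:
  fixes X Y Q1 Q2 Q3 :: real
  assumes "X^2 \<le> Q1" "X^2 \<le> Q2" "Y^2 = Q3"
  shows "X^(2*j+1) * X^(2*j+1) * (Y^2)^(j+1) \<le> 2 * real (j+1) ^ 2 * (X*Y)^2 * (Q1*Q2*Q3)^j"
proof -
  have A: "X^(2*(2*(j+1)-1)) * Y^(2*(j+1)) \<le> 2 * real (j+1) ^ 2 * (X*Y)^2 * (Q1*Q2*Q3)^(j+1-1)"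
    by (rule deg_case) (use assms in auto)
  have e1: "X^(2*(2*(j+1)-1)) = X^(2*j+1) * X^(2*j+1)"
    by (simp add: power_add[symmetric] mult_2)
  have e2: "Y^(2*(j+1)) = (Y^2)^(j+1)" by (rule power_mult)
  have e3: "j+1-1 = j" by simp
  show ?thesis using A unfolding e1 e2 e3 .
qed

lemma core_j:
  fixes a1 a2 b1 b2 :: real
  shows "a1^(2*j+1) * (a1-b1)^(2*j+1) * (b1^2+b2^2)^(j+1) + a1^(2*j+1)*b1^(2*j+1)*((a1-b1)^2+(a2-b2)^2)^(j+1)
           - (a1-b1)^(2*j+1)*b1^(2*j+1)*(a1^2+a2^2)^(j+1)
   \<le> 2*real (j+1)^2 * (a1*b2-a2*b1)^2 * ((a1^2+a2^2)*(b1^2+b2^2)*((a1-b1)^2+(a2-b2)^2))^j"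
proof -
  have odd: "(-x::real)^(2*j+1) = - (x^(2*j+1))" for x by (simp add: power_minus_odd)
  consider "a1 = 0" | "a1 \<noteq> 0" "b1 = 0" | "a1 \<noteq> 0" "b1 \<noteq> 0" "a1 = b1" | "a1 \<noteq> 0" "b1 \<noteq> 0" "a1 - b1 \<noteq> 0"
    by auto
  then show ?thesis
  proof cases
    case 1
    have "b1^(2*j+1) * b1^(2*j+1) * (a2^2)^(j+1) \<le> 2 * real (j+1) ^ 2 * (b1*a2)^2 * ((b1^2+b2^2)*((a1-b1)^2+(a2-b2)^2)*(a2^2))^j"
      by (rule deg_case_j) (use 1 in auto)
    then show ?thesis using 1 by (simp add: odd algebra_simps)
  next
    case 2
    have "a1^(2*j+1) * a1^(2*j+1) * (b2^2)^(j+1) \<le> 2 * real (j+1) ^ 2 * (a1*b2)^2 * ((a1^2+a2^2)*((a1-b1)^2+(a2-b2)^2)*(b2^2))^j"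
      by (rule deg_case_j) (use 2 in auto)
    then show ?thesis using 2 by (simp add: algebra_simps)
  next
    case 3
    have "a1^(2*j+1) * a1^(2*j+1) * ((a2-b2)^2)^(j+1) \<le> 2 * real (j+1) ^ 2 * (a1*(a2-b2))^2 * ((a1^2+a2^2)*(b1^2+b2^2)*((a1-b1)^2+(a2-b2)^2))^j"
      by (rule deg_case_j) (use 3 in auto)
    then show ?thesis using 3 by (simp add: algebra_simps power2_eq_square)
  next
    case 4
    define s where "s = a2/a1"
    define t where "t = b2/b1"
    define u where "u = (a2-b2)/(a1-b1)"
    note uv = uv_facts[OF 4 s_def t_def u_def]
    have ME: "LHS = (a1*b1*(a1-b1))^(2*j) * (a1*(a1-b1)*b1^2*hh (j+1) t + a1*b1*(a1-b1)^2*hh (j+1) u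
        - (a1-b1)*b1*a1^2*hh (j+1) s)" if "LHS = a1^(2*j+1) * (a1-b1)^(2*j+1) * (b1^2+b2^2)^(j+1) + a1^(2*j+1)*b1^(2*j+1)*((a1-b1)^2+(a2-b2)^2)^(j+1)
           - (a1-b1)^(2*j+1)*b1^(2*j+1)*(a1^2+a2^2)^(j+1)" for LHS
      unfolding that s_def t_def u_def by (rule main_case[OF 4])
    have Pq: "((a1^2+a2^2)*(b1^2+b2^2)*((a1-b1)^2+(a2-b2)^2))^j
       = (a1*b1*(a1-b1))^(2*j) * ((1+s^2)*(1+t^2)*(1+u^2))^j"
    proof -
      have "(a1^2+a2^2)*(b1^2+b2^2)*((a1-b1)^2+(a2-b2)^2) = (a1*b1*(a1-b1))^2 * ((1+s^2)*(1+t^2)*(1+u^2))"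
        unfolding qa_hh(2)[OF 4(1)] qa_hh(2)[OF 4(2)] qa_hh(2)[OF 4(3)] s_def[symmetric] t_def[symmetric] u_def[symmetric]
        by (simp add: power_mult_distrib)
      then show ?thesis by (simp add: power_mult_distrib power_mult)
    qed
    have R0: "0 \<le> 2*real (j+1)^2 * (a1*b2-a2*b1)^2 * ((a1^2+a2^2)*(b1^2+b2^2)*((a1-b1)^2+(a2-b2)^2))^j"
      by simp
    show ?thesis
    proof (cases "s = t")
      case True
      then have "s = u" using uv(1) by simp
      then have "a1*(a1-b1)*b1^2*hh (j+1) t + a1*b1*(a1-b1)^2*hh (j+1) u - (a1-b1)*b1*a1^2*hh (j+1) s = 0"
        using True by (simp add: algebra_simps power2_eq_square)
      then show ?thesis using ME[OF refl] R0 by simp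
    next
      case False
      have su: "s \<noteq> u" using uv(1) False 4 by auto
      have tu: "t \<noteq> u" using uv(2) False 4 by auto
      have FI: "a1*(a1-b1)*b1^2*hh (j+1) t + a1*b1*(a1-b1)^2*hh (j+1) u - (a1-b1)*b1*a1^2*hh (j+1) s
         = (a1*b2-a2*b1)^2 * dd (hh (j+1)) s t u"
        unfolding dd_def by (rule field_id[OF 4 s_def t_def u_def False])
      have B: "\<bar>dd (hh (j+1)) s t u\<bar> \<le> 2 * real (j+1) ^ 2 * ((1+s^2)*(1+t^2)*(1+u^2))^j"
        using dd_bound[of "j+1" s t u] False su tu by simp
      have "(a1*b1*(a1-b1))^(2*j) * ((a1*b2-a2*b1)^2 * dd (hh (j+1)) s t u)
          \<le> (a1*b1*(a1-b1))^(2*j) * ((a1*b2-a2*b1)^2 * (2 * real (j+1) ^ 2 * ((1+s^2)*(1+t^2)*(1+u^2))^j))"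
      proof (rule mult_left_mono)
        show "(a1*b2-a2*b1)^2 * dd (hh (j+1)) s t u \<le> (a1*b2-a2*b1)^2 * (2 * real (j+1) ^ 2 * ((1+s^2)*(1+t^2)*(1+u^2))^j)"
          using B by (intro mult_left_mono) auto
        show "0 \<le> (a1*b1*(a1-b1))^(2*j)" by (simp add: power_mult)
      qed
      then show ?thesis unfolding ME[OF refl] FI Pq by (simp add: algebra_simps)
    qed
  qed
qed

lemma norm2_vec2: "norm (x::real^2)^2 = x$1^2 + x$2^2"
  unfolding power2_norm_eq_inner inner_vec_def sum_2 by (simp add: power2_eq_square)

lemma p_bound:
  fixes a b :: "real^2" and i k :: 2
  assumes n: "n \<ge> 1" and a: "a \<noteq> 0" and b: "b \<noteq> 0" and ab: "a - b \<noteq> 0"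
    and ik: "(i = 1 \<and> k = 2) \<or> (i = 2 \<and> k = 1)"
  shows "(a$i)^(2*n-1) * (a-b)$i^(2*n-1) / (norm a^(2*n) * norm (a-b)^(2*n))
       + (a$i)^(2*n-1) * (b$i)^(2*n-1) / (norm a^(2*n) * norm b^(2*n))
       - (a-b)$i^(2*n-1) * (b$i)^(2*n-1) / (norm (a-b)^(2*n) * norm b^(2*n))
     \<le> 2 * real n^2 * (a$1*b$2 - a$2*b$1)^2 / (norm a^2 * norm b^2 * norm (a-b)^2)"
proof -
  obtain j where j: "n = j + 1" using n by (metis add.commute le_Suc_ex)
  have m: "2*n-1 = 2*j+1" "2*n = 2*(j+1)" using j by auto
  have nq: "norm x^2 = x$i^2 + x$k^2" for x :: "real^2" using ik norm2_vec2[of x] by auto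
  have D: "(a$1*b$2 - a$2*b$1)^2 = (a$i*b$k - a$k*b$i)^2" using ik by (auto simp: algebra_simps power2_eq_square)
  define a1 where "a1 = a$i"
  define a2 where "a2 = a$k"
  define b1 where "b1 = b$i"
  define b2 where "b2 = b$k"
  have qa: "norm a^2 = a1^2+a2^2" unfolding a1_def a2_def by (rule nq)
  have qb: "norm b^2 = b1^2+b2^2" unfolding b1_def b2_def by (rule nq)
  have qw: "norm (a-b)^2 = (a1-b1)^2+(a2-b2)^2" unfolding a1_def a2_def b1_def b2_def using nq[of "a-b"] by simp
  have pa: "0 < norm a^2" "0 < norm b^2" "0 < norm (a-b)^2" using a b ab by auto
  define Q where "Q = norm a^2 * norm b^2 * norm (a-b)^2"
  have Qp: "Q > 0" unfolding Q_def using pa by simp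
  have core: "a1^(2*j+1) * (a1-b1)^(2*j+1) * (b1^2+b2^2)^(j+1) + a1^(2*j+1)*b1^(2*j+1)*((a1-b1)^2+(a2-b2)^2)^(j+1)
           - (a1-b1)^(2*j+1)*b1^(2*j+1)*(a1^2+a2^2)^(j+1)
   \<le> 2*real (j+1)^2 * (a1*b2-a2*b1)^2 * Q^j"
    using core_j[of a1 j b1 b2 a2] unfolding Q_def qa qb qw by simp
  have LHS: "(a$i)^(2*n-1) * (a-b)$i^(2*n-1) / (norm a^(2*n) * norm (a-b)^(2*n))
       + (a$i)^(2*n-1) * (b$i)^(2*n-1) / (norm a^(2*n) * norm b^(2*n))
       - (a-b)$i^(2*n-1) * (b$i)^(2*n-1) / (norm (a-b)^(2*n) * norm b^(2*n))
     = (a1^(2*j+1) * (a1-b1)^(2*j+1) * (b1^2+b2^2)^(j+1) + a1^(2*j+1)*b1^(2*j+1)*((a1-b1)^2+(a2-b2)^2)^(j+1)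
           - (a1-b1)^(2*j+1)*b1^(2*j+1)*(a1^2+a2^2)^(j+1)) / Q^(j+1)"
  proof -
    have e: "norm x^(2*(j+1)) = (norm x^2)^(j+1)" for x :: "real^2" by (rule power_mult)
    have nz: "(a1^2+a2^2)^(j+1) \<noteq> 0" "(b1^2+b2^2)^(j+1) \<noteq> 0" "((a1-b1)^2+(a2-b2)^2)^(j+1) \<noteq> 0"
      using pa unfolding qa qb qw by auto
    have Qe: "Q^(j+1) = (a1^2+a2^2)^(j+1) * (b1^2+b2^2)^(j+1) * ((a1-b1)^2+(a2-b2)^2)^(j+1)"
      unfolding Q_def qa qb qw by (simp add: power_mult_distrib)
    have f3: "x*y/(A*W) + x*z/(A*B) - y*z/(W*B) = (x*y*B + x*z*W - y*z*A)/(A*B*W)"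
      if "A \<noteq> 0" "B \<noteq> 0" "W \<noteq> 0" for x y z A B W :: real
      using that by (simp add: field_simps)
    have m3: "2*(j+1)-1 = 2*j+1" by simp
    show ?thesis unfolding m e m3 qa qb qw Qe a1_def[symmetric] b1_def[symmetric] vector_minus_component
      by (rule f3[OF nz(1) nz(2) nz(3)])
  qed
  have E2: "2*real (j+1)^2 * (a1*b2-a2*b1)^2 * Q^j / Q^(j+1) = 2*real (j+1)^2 * (a1*b2-a2*b1)^2 / Q"
    using Qp by (simp add: field_simps)
  have D2: "(a$1*b$2 - a$2*b$1)^2 = (a1*b2-a2*b1)^2" unfolding D a1_def a2_def b1_def b2_def ..
  show ?thesis unfolding LHS D2 Q_def[symmetric] unfolding j E2[symmetric]
    by (rule divide_right_mono[OF core]) (use Qp in simp)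
qed

lemma collinear_D:
  fixes z1 z2 z3 :: "real^2"
  defines "a \<equiv> z1 - z2" and "b \<equiv> z3 - z2"
  shows "collinear {z1, z2, z3} \<longleftrightarrow> a$1*b$2 - a$2*b$1 = 0"
proof -
  have c: "collinear {z1, z2, z3} \<longleftrightarrow> a = 0 \<or> b = 0 \<or> (\<exists>c. b = c *\<^sub>R a)"
    unfolding a_def b_def by (simp add: collinear_3 collinear_lemma)
  show ?thesis
  proof
    assume "collinear {z1, z2, z3}"
    then consider "a = 0" | "b = 0" | c where "b = c *\<^sub>R a" using c by blast
    then show "a$1*b$2 - a$2*b$1 = 0" by cases auto
  next
    assume D: "a$1*b$2 - a$2*b$1 = 0"
    show "collinear {z1, z2, z3}"
    proof (cases "a = 0")
      case True then show ?thesis using c by blast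
    next
      case False
      then have "a$1 \<noteq> 0 \<or> a$2 \<noteq> 0" unfolding vec_eq_iff forall_2 by simp
      then have "\<exists>c. b = c *\<^sub>R a"
      proof
        assume a1: "a$1 \<noteq> 0"
        have "b = (b$1/a$1) *\<^sub>R a" unfolding vec_eq_iff forall_2 using a1 D
          by (simp add: field_simps)
        then show ?thesis by blast
      next
        assume a2: "a$2 \<noteq> 0"
        have "b = (b$2/a$2) *\<^sub>R a" unfolding vec_eq_iff forall_2 using a2 D
          by (simp add: field_simps)
        then show ?thesis by blast
      qed
      then show ?thesis using c by blast
    qed
  qed
qed

lemma menger_sq:
  fixes z1 z2 z3 :: "real^2"
  defines "a \<equiv> z1 - z2" and "b \<equiv> z3 - z2"
  assumes nc: "\<not> collinear {z1, z2, z3}"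
  shows "menger z1 z2 z3 ^ 2 = 4 * (a$1*b$2 - a$2*b$1)^2 / (norm a^2 * norm b^2 * norm (a-b)^2)"
proof -
  define D where "D = a$1*b$2 - a$2*b$1"
  have Dz: "D \<noteq> 0" using nc collinear_D[of z1 z2 z3] unfolding D_def a_def b_def by simp
  define qa where "qa = a$1^2 + a$2^2"
  define qb where "qb = b$1^2 + b$2^2"
  define y1 where "y1 = (qa*b$2 - qb*a$2)/(2*D)"
  define y2 where "y2 = (qb*a$1 - qa*b$1)/(2*D)"
  define y :: "real^2" where "y = (\<chi> i. if i = 1 then y1 else y2)"
  have y12: "y$1 = y1" "y$2 = y2" unfolding y_def by simp_all
  define R where "R = sqrt (y1^2 + y2^2)"
  have "y1*a$1 + y2*a$2 = qa*(a$1*b$2 - a$2*b$1)/(2*D)" unfolding y1_def y2_def using Dz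
    by (simp add: field_simps)
  then have dotsa: "y1*a$1 + y2*a$2 = qa/2" unfolding D_def[symmetric] using Dz by simp
  have "y1*b$1 + y2*b$2 = qb*(a$1*b$2 - a$2*b$1)/(2*D)" unfolding y1_def y2_def using Dz
    by (simp add: field_simps)
  then have dotsb: "y1*b$1 + y2*b$2 = qb/2" unfolding D_def[symmetric] using Dz by simp
  have nrm: "norm v = sqrt (v$1^2 + v$2^2)" for v :: "real^2"
    by (metis norm2_vec2 norm_ge_zero real_sqrt_unique)
  have P: "\<exists>x. dist x z1 = R \<and> dist x z2 = R \<and> dist x z3 = R"
  proof (intro exI conjI)
    have e1: "z2 + y - z1 = y - a" "z2 + y - z3 = y - b" "z2 + y - z2 = y" unfolding a_def b_def by (simp_all add: algebra_simps)
    show "dist (z2 + y) z2 = R" unfolding dist_norm e1 nrm y12 R_def ..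
    show "dist (z2 + y) z1 = R" unfolding dist_norm e1 nrm y12 R_def vector_minus_component
      using dotsa unfolding qa_def by (intro arg_cong[where f=sqrt]) (simp add: algebra_simps power2_eq_square)
    show "dist (z2 + y) z3 = R" unfolding dist_norm e1 nrm y12 R_def vector_minus_component
      using dotsb unfolding qb_def by (intro arg_cong[where f=sqrt]) (simp add: algebra_simps power2_eq_square)
  qed
  have U: "r = R" if ex: "\<exists>x. dist x z1 = r \<and> dist x z2 = r \<and> dist x z3 = r" for r
  proof -
    obtain x where x: "dist x z1 = r" "dist x z2 = r" "dist x z3 = r" using ex by blast
    define v where "v = x - z2"
    have e1: "x - z1 = v - a" "x - z3 = v - b" "x - z2 = v" unfolding a_def b_def v_def by (simp_all add: algebra_simps)
    have n1: "norm (v - a)^2 = norm v^2" "norm (v - b)^2 = norm v^2"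
      using x unfolding dist_norm e1 by simp_all
    have da: "v$1*a$1 + v$2*a$2 = qa/2" using n1(1) unfolding norm2_vec2 vector_minus_component qa_def
      by (simp add: algebra_simps power2_eq_square)
    have db: "v$1*b$1 + v$2*b$2 = qb/2" using n1(2) unfolding norm2_vec2 vector_minus_component qb_def
      by (simp add: algebra_simps power2_eq_square)
    have v1: "v$1 = y1"
    proof -
      have "v$1 * D = (qa*b$2 - qb*a$2)/2" unfolding D_def
        using arg_cong[OF da, of "\<lambda>t. t*b$2"] arg_cong[OF db, of "\<lambda>t. t*a$2"] by (simp add: algebra_simps)
      then show ?thesis unfolding y1_def using Dz by (simp add: field_simps)
    qed
    have v2: "v$2 = y2"
    proof -
      have "v$2 * D = (qb*a$1 - qa*b$1)/2" unfolding D_def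
        using arg_cong[OF da, of "\<lambda>t. t*b$1"] arg_cong[OF db, of "\<lambda>t. t*a$1"] by (simp add: algebra_simps)
      then show ?thesis unfolding y2_def using Dz by (simp add: field_simps)
    qed
    show ?thesis using x(2) unfolding dist_norm e1 nrm v1 v2 R_def by simp
  qed
  have TH: "(THE r. \<exists>x. dist x z1 = r \<and> dist x z2 = r \<and> dist x z3 = r) = R"
    using P U by (rule the_equality)
  have R2: "R^2 = (qa*b$2 - qb*a$2)^2/(4*D^2) + (qb*a$1 - qa*b$1)^2/(4*D^2)"
    unfolding R_def y1_def y2_def by (simp add: power_divide)
  have Num: "(qa*b$2 - qb*a$2)^2 + (qb*a$1 - qa*b$1)^2 = norm a^2 * norm b^2 * norm (a-b)^2"
    unfolding qa_def qb_def norm2_vec2 vector_minus_component by algebra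
  have R2': "R^2 = norm a^2 * norm b^2 * norm (a-b)^2 / (4*D^2)"
    unfolding R2 Num[symmetric] by (simp add: add_divide_distrib)
  have "menger z1 z2 z3 = 1 / R" unfolding menger_def TH using nc by simp
  then show ?thesis unfolding D_def[symmetric] using R2' by (simp add: power_divide)
qed

theorem lemma2p2:
  fixes n :: nat
  assumes "n \<ge> 1"
  shows "\<exists>C>0. \<forall>z1 z2 z3 :: real^2. \<forall>i :: 2.
           z1 \<noteq> z2 \<and> z1 \<noteq> z3 \<and> z2 \<noteq> z3 \<longrightarrow>
           pfun n i z1 z2 z3 \<le> C * (menger z1 z2 z3)^2"
proof (intro exI[of _ "real n^2/2"] conjI allI impI)
  show "real n^2/2 > 0" using assms by simp
  fix z1 z2 z3 :: "real^2" and i :: 2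
  assume dz: "z1 \<noteq> z2 \<and> z1 \<noteq> z3 \<and> z2 \<noteq> z3"
  define a where "a = z1 - z2"
  define b where "b = z3 - z2"
  have a0: "a \<noteq> 0" "b \<noteq> 0" "a - b \<noteq> 0" using dz unfolding a_def b_def by auto
  obtain k :: 2 where ik: "(i = 1 \<and> k = 2) \<or> (i = 2 \<and> k = 1)" using exhaust_2[of i] by blast
  have od: "odd (2*n-1)" using assms by simp
  have Kneg: "Kker n i (-x) = - Kker n i x" for x :: "real^2"
    unfolding Kker_def using od by (simp add: power_minus_odd)
  have e: "z1 - z2 = a" "z1 - z3 = a - b" "z2 - z1 = -a" "z2 - z3 = -b" "z3 - z1 = -(a-b)" "z3 - z2 = b"
    unfolding a_def b_def by (simp_all add: algebra_simps)
  have pf: "pfun n i z1 z2 z3 = (a$i)^(2*n-1) * (a-b)$i^(2*n-1) / (norm a^(2*n) * norm (a-b)^(2*n))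
       + (a$i)^(2*n-1) * (b$i)^(2*n-1) / (norm a^(2*n) * norm b^(2*n))
       - (a-b)$i^(2*n-1) * (b$i)^(2*n-1) / (norm (a-b)^(2*n) * norm b^(2*n))"
    unfolding pfun_def e Kneg unfolding Kker_def by simp
  have pb: "pfun n i z1 z2 z3 \<le> 2 * real n^2 * (a$1*b$2 - a$2*b$1)^2 / (norm a^2 * norm b^2 * norm (a-b)^2)"
    unfolding pf by (rule p_bound[OF assms a0 ik])
  show "pfun n i z1 z2 z3 \<le> real n^2/2 * (menger z1 z2 z3)^2"
  proof (cases "collinear {z1, z2, z3}")
    case True
    then have "a$1*b$2 - a$2*b$1 = 0" using collinear_D[of z1 z2 z3] unfolding a_def b_def by simp
    then show ?thesis using pb True unfolding menger_def by simp
  next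
    case False
    have "menger z1 z2 z3 ^ 2 = 4 * (a$1*b$2 - a$2*b$1)^2 / (norm a^2 * norm b^2 * norm (a-b)^2)"
      using menger_sq[OF False] unfolding a_def b_def .
    then show ?thesis using pb by simp
  qed
qed

end
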